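(* If $A_1,\ldots,A_n$ are sequentially distorted subsets of a group $G$, then $A:=A_1A_2\cdots A_n=\{a_1a_2\cdots a_n: a_i\in A_i\}$ is sequentially distorted in $G$. Moreover, if each $A_j$ is strongly distorted, then $A$ is strongly distorted.
   Context: For $S\subset G$ and $k\in\mathbb N$, $S^k=\{s_1\cdots s_k: s_i\in S\}$. A subset $A$ of $G$ is sequentially distorted if there is a sequence $(w_n)\subset\mathbb N$ such that for every sequence $(a_n)\subset A$ there is a finite $S\subset G$ with $a_n\in S^{w_n}$ for all $n$. It is strongly distorted if there are $m\in\mathbb N$ and $(w_n)\subset\mathbb N$ such that for every sequence $(a_n)\subset A$ there is $S\subset G$ of cardinality $m$ with $a_n\in S^{w_n}$ for all $n$. *)

theory Defs
  imports "HOL-Algebra.Group"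
begin

definition list_prod :: "('a, 'b) monoid_scheme \<Rightarrow> 'a list \<Rightarrow> 'a" where
  "list_prod G xs = foldr (\<lambda>x y. x \<otimes>\<^bsub>G\<^esub> y) xs \<one>\<^bsub>G\<^esub>"

definition set_pow :: "('a, 'b) monoid_scheme \<Rightarrow> 'a set \<Rightarrow> nat \<Rightarrow> 'a set" where
  "set_pow G S k = {list_prod G xs | xs. length xs = k \<and> set xs \<subseteq> S}"

definition set_list_prod :: "('a, 'b) monoid_scheme \<Rightarrow> 'a set list \<Rightarrow> 'a set" where
  "set_list_prod G As = {list_prod G xs | xs. list_all2 (\<lambda>x A. x \<in> A) xs As}"

text \<open>Natural numbers are taken to be positive (N = {1,2,...}).\<close>
definition seq_distorted :: "('a, 'b) monoid_scheme \<Rightarrow> 'a set \<Rightarrow> bool" where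
  "seq_distorted G A \<longleftrightarrow>
     (\<exists>w :: nat \<Rightarrow> nat. (\<forall>n. w n \<ge> 1) \<and>
        (\<forall>a :: nat \<Rightarrow> 'a. (\<forall>n. a n \<in> A) \<longrightarrow>
           (\<exists>S. S \<subseteq> carrier G \<and> finite S \<and> (\<forall>n. a n \<in> set_pow G S (w n)))))"

definition strongly_distorted :: "('a, 'b) monoid_scheme \<Rightarrow> 'a set \<Rightarrow> bool" where
  "strongly_distorted G A \<longleftrightarrow>
     (\<exists>(m :: nat) (w :: nat \<Rightarrow> nat). m \<ge> 1 \<and> (\<forall>n. w n \<ge> 1) \<and>
        (\<forall>a :: nat \<Rightarrow> 'a. (\<forall>n. a n \<in> A) \<longrightarrow>
           (\<exists>S. S \<subseteq> carrier G \<and> finite S \<and> card S = m \<and>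
                (\<forall>n. a n \<in> set_pow G S (w n)))))"

end

theory Submission
  imports Defs
begin

lemma list_prod_append:
  assumes "group G" "set xs \<subseteq> carrier G" "set ys \<subseteq> carrier G"
  shows "list_prod G (xs @ ys) = list_prod G xs \<otimes>\<^bsub>G\<^esub> list_prod G ys"
  using assms(2)
proof (induction xs)
  case Nil
  have "list_prod G ys \<in> carrier G" using assms(3)
  proof (induction ys)
    case Nil then show ?case using assms(1) by (simp add: list_prod_def group.is_monoid monoid.one_closed)
  next
    case (Cons a ys) then show ?case using assms(1)
      by (simp add: list_prod_def group.is_monoid monoid.m_closed)
  qed
  then show ?case using assms(1) by (simp add: list_prod_def group.is_monoid monoid.l_one)
next
  case (Cons a xs)
  have cl: "\<And>zs. set zs \<subseteq> carrier G \<Longrightarrow> list_prod G zs \<in> carrier G"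
  proof -
    fix zs :: "'a list" assume "set zs \<subseteq> carrier G"
    then show "list_prod G zs \<in> carrier G"
      by (induction zs) (use assms(1) in \<open>auto simp: list_prod_def group.is_monoid monoid.m_closed monoid.one_closed\<close>)
  qed
  have "list_prod G ((a # xs) @ ys) = a \<otimes>\<^bsub>G\<^esub> list_prod G (xs @ ys)"
    by (simp add: list_prod_def)
  also have "\<dots> = a \<otimes>\<^bsub>G\<^esub> (list_prod G xs \<otimes>\<^bsub>G\<^esub> list_prod G ys)" using Cons by simp
  also have "\<dots> = (a \<otimes>\<^bsub>G\<^esub> list_prod G xs) \<otimes>\<^bsub>G\<^esub> list_prod G ys"
    using Cons.prems cl[of xs] cl[of ys] assms
    by (simp add: group.is_monoid monoid.m_assoc)
  also have "\<dots> = list_prod G (a # xs) \<otimes>\<^bsub>G\<^esub> list_prod G ys" by (simp add: list_prod_def)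
  finally show ?case .
qed

lemma set_pow_mult:
  assumes "group G" "S \<subseteq> carrier G" "T \<subseteq> carrier G"
    "x \<in> set_pow G S k" "y \<in> set_pow G T l"
  shows "x \<otimes>\<^bsub>G\<^esub> y \<in> set_pow G (S \<union> T) (k + l)"
proof -
  obtain xs where xs: "x = list_prod G xs" "length xs = k" "set xs \<subseteq> S"
    using assms(4) by (auto simp: set_pow_def)
  obtain ys where ys: "y = list_prod G ys" "length ys = l" "set ys \<subseteq> T"
    using assms(5) by (auto simp: set_pow_def)
  have "x \<otimes>\<^bsub>G\<^esub> y = list_prod G (xs @ ys)"
    using list_prod_append[OF assms(1), of xs ys] xs ys assms(2,3) by auto
  then show ?thesis unfolding set_pow_def using xs ys
    by (intro CollectI exI[of _ "xs @ ys"]) auto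
qed

lemma set_pow_mono:
  "S \<subseteq> T \<Longrightarrow> set_pow G S k \<subseteq> set_pow G T k"
  unfolding set_pow_def by blast

lemma pad_set:
  assumes "S \<subseteq> C" "finite S" "card S \<le> m" "infinite C \<or> m \<le> card C"
  shows "\<exists>T. S \<subseteq> T \<and> T \<subseteq> C \<and> finite T \<and> card T = m"
proof -
  obtain U where U: "U \<subseteq> C - S" "finite U" "card U = m - card S"
  proof (cases "finite C")
    case True
    then have "card (C - S) = card C - card S" using assms(1,2) by (simp add: card_Diff_subset)
    then have le: "m - card S \<le> card (C - S)" using assms(4) True by linarith
    have "finite (C - S)" using True by blast
    from obtain_subset_with_card_n[OF le] obtain U where "U \<subseteq> C - S" "card U = m - card S" by blast
    moreover have "finite U" using \<open>finite (C - S)\<close> \<open>U \<subseteq> C - S\<close> finite_subset by blast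
    ultimately show ?thesis using that by blast
  next
    case False
    then have "infinite (C - S)" using assms(2) by simp
    from infinite_arbitrarily_large[OF this] obtain U where
      "finite U" "card U = m - card S" "U \<subseteq> C - S" by blast
    then show ?thesis using that by blast
  qed
  have "card (S \<union> U) = card S + card U"
    using U assms(2) by (intro card_Un_disjoint) auto
  then have c: "card (S \<union> U) = m" using U(3) assms(3) by linarith
  have "S \<union> U \<subseteq> C" using U(1) assms(1) by blast
  moreover have "finite (S \<union> U)" using U(2) assms(2) by blast
  ultimately show ?thesis using c by blast
qed

definition setmul :: "('a, 'b) monoid_scheme \<Rightarrow> 'a set \<Rightarrow> 'a set \<Rightarrow> 'a set" where
  "setmul G A B = {x \<otimes>\<^bsub>G\<^esub> y | x y. x \<in> A \<and> y \<in> B}"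

lemma set_list_prod_Nil: "set_list_prod G [] = {\<one>\<^bsub>G\<^esub>}"
  by (simp add: set_list_prod_def list_prod_def)

lemma set_list_prod_Cons: "set_list_prod G (A # As) = setmul G A (set_list_prod G As)"
proof
  show "set_list_prod G (A # As) \<subseteq> setmul G A (set_list_prod G As)"
    unfolding set_list_prod_def setmul_def
    by (clarsimp simp: list_all2_Cons2 list_prod_def) blast
  show "setmul G A (set_list_prod G As) \<subseteq> set_list_prod G (A # As)"
  proof
    fix x assume "x \<in> setmul G A (set_list_prod G As)"
    then obtain z zs where "z \<in> A" "list_all2 (\<lambda>x A. x \<in> A) zs As" "x = z \<otimes>\<^bsub>G\<^esub> list_prod G zs"
      unfolding setmul_def set_list_prod_def by blast
    then show "x \<in> set_list_prod G (A # As)" unfolding set_list_prod_def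
      by (intro CollectI exI[of _ "z # zs"]) (simp add: list_prod_def)
  qed
qed

lemma decomp:
  assumes "\<forall>n. a n \<in> setmul G A B"
  obtains b c where "\<forall>n. b n \<in> A" "\<forall>n. c n \<in> B" "\<forall>n. a n = b n \<otimes>\<^bsub>G\<^esub> c n"
proof -
  have "\<forall>n. \<exists>p. fst p \<in> A \<and> snd p \<in> B \<and> a n = fst p \<otimes>\<^bsub>G\<^esub> snd p"
    using assms unfolding setmul_def by fastforce
  then obtain f where "\<forall>n. fst (f n) \<in> A \<and> snd (f n) \<in> B \<and> a n = fst (f n) \<otimes>\<^bsub>G\<^esub> snd (f n)"
    by metis
  then show ?thesis using that[of "\<lambda>n. fst (f n)" "\<lambda>n. snd (f n)"] by blast
qed

lemma one_pow: "group G \<Longrightarrow> \<one>\<^bsub>G\<^esub> \<in> set_pow G {\<one>\<^bsub>G\<^esub>} (Suc 0)"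
  unfolding set_pow_def list_prod_def
  by (rule CollectI, rule exI[of _ "[\<one>\<^bsub>G\<^esub>]"])
     (simp add: group.is_monoid monoid.r_one monoid.one_closed)

lemma seq_one: "group G \<Longrightarrow> seq_distorted G {\<one>\<^bsub>G\<^esub>}"
  unfolding seq_distorted_def
  apply (rule exI[of _ "\<lambda>n. 1"])
  apply (auto intro!: exI[of _ "{\<one>\<^bsub>G\<^esub>}"] simp: one_pow group.is_monoid monoid.one_closed)
  done

lemma strong_one: "group G \<Longrightarrow> strongly_distorted G {\<one>\<^bsub>G\<^esub>}"
  unfolding strongly_distorted_def
  apply (rule exI[of _ 1], rule exI[of _ "\<lambda>n. 1"])
  apply (auto intro!: exI[of _ "{\<one>\<^bsub>G\<^esub>}"] simp: one_pow group.is_monoid monoid.one_closed)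
  done

lemma seq_mul:
  assumes "group G" "seq_distorted G A" "seq_distorted G B"
  shows "seq_distorted G (setmul G A B)"
proof -
  obtain w1 where w1: "\<forall>n::nat. w1 n \<ge> 1" "\<forall>a :: nat \<Rightarrow> 'a. (\<forall>n::nat. a n \<in> A) \<longrightarrow>
           (\<exists>S. S \<subseteq> carrier G \<and> finite S \<and> (\<forall>n::nat. a n \<in> set_pow G S (w1 n)))"
    using assms(2) unfolding seq_distorted_def by blast
  obtain w2 where w2: "\<forall>n::nat. w2 n \<ge> 1" "\<forall>a :: nat \<Rightarrow> 'a. (\<forall>n::nat. a n \<in> B) \<longrightarrow>
           (\<exists>S. S \<subseteq> carrier G \<and> finite S \<and> (\<forall>n::nat. a n \<in> set_pow G S (w2 n)))"
    using assms(3) unfolding seq_distorted_def by blast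
  show ?thesis unfolding seq_distorted_def
  proof (intro exI[of _ "\<lambda>n. w1 n + w2 n"] conjI allI impI)
    fix n show "1 \<le> w1 n + w2 n" using w1(1)[rule_format, of n] by linarith
  next
    fix a assume a: "\<forall>n::nat. a n \<in> setmul G A B"
    obtain b c where bc: "\<forall>n::nat. b n \<in> A" "\<forall>n::nat. c n \<in> B" "\<forall>n::nat. a n = b n \<otimes>\<^bsub>G\<^esub> c n"
      by (rule decomp[OF a])
    obtain S1 where S1: "S1 \<subseteq> carrier G" "finite S1" "\<forall>n::nat. b n \<in> set_pow G S1 (w1 n)"
      using w1(2)[THEN spec[of _ b], THEN mp, OF bc(1)] by blast
    obtain S2 where S2: "S2 \<subseteq> carrier G" "finite S2" "\<forall>n::nat. c n \<in> set_pow G S2 (w2 n)"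
      using w2(2)[THEN spec[of _ c], THEN mp, OF bc(2)] by blast
    show "\<exists>S\<subseteq>carrier G. finite S \<and> (\<forall>n::nat. a n \<in> set_pow G S (w1 n + w2 n))"
    proof (intro exI[of _ "S1 \<union> S2"] conjI allI)
      fix n show "a n \<in> set_pow G (S1 \<union> S2) (w1 n + w2 n)"
        using set_pow_mult[OF assms(1) S1(1) S2(1) S1(3)[rule_format, of n] S2(3)[rule_format, of n]] bc(3)
        by simp
    qed (use S1(1,2) S2(1,2) in simp_all)
  qed
qed

lemma strong_mul:
  assumes "group G" "strongly_distorted G A" "strongly_distorted G B"
  shows "strongly_distorted G (setmul G A B)"
proof -
  obtain m1 w1 where w1: "m1 \<ge> 1" "\<forall>n::nat. w1 n \<ge> 1" "\<forall>a :: nat \<Rightarrow> 'a. (\<forall>n::nat. a n \<in> A) \<longrightarrow>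
           (\<exists>S. S \<subseteq> carrier G \<and> finite S \<and> card S = m1 \<and> (\<forall>n::nat. a n \<in> set_pow G S (w1 n)))"
    using assms(2) unfolding strongly_distorted_def by blast
  obtain m2 w2 where w2: "m2 \<ge> 1" "\<forall>n::nat. w2 n \<ge> 1" "\<forall>a :: nat \<Rightarrow> 'a. (\<forall>n::nat. a n \<in> B) \<longrightarrow>
           (\<exists>S. S \<subseteq> carrier G \<and> finite S \<and> card S = m2 \<and> (\<forall>n::nat. a n \<in> set_pow G S (w2 n)))"
    using assms(3) unfolding strongly_distorted_def by blast
  define M where "M = (if infinite (carrier G) \<or> m1 + m2 \<le> card (carrier G) then m1 + m2
                       else card (carrier G))"
  have one: "\<one>\<^bsub>G\<^esub> \<in> carrier G" using assms(1) by (simp add: group.is_monoid monoid.one_closed)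
  have M1: "M \<ge> 1"
  proof (cases "infinite (carrier G) \<or> m1 + m2 \<le> card (carrier G)")
    case True then show ?thesis using w1 M_def by simp
  next
    case False
    then have "card (carrier G) > 0" using one card_gt_0_iff by blast
    then show ?thesis using False M_def by simp
  qed
  show ?thesis unfolding strongly_distorted_def
  proof (intro exI[of _ M] exI[of _ "\<lambda>n. w1 n + w2 n"] conjI allI impI M1)
    fix n show "1 \<le> w1 n + w2 n" using w1(2)[rule_format, of n] by linarith
  next
    fix a assume a: "\<forall>n::nat. a n \<in> setmul G A B"
    obtain b c where bc: "\<forall>n::nat. b n \<in> A" "\<forall>n::nat. c n \<in> B" "\<forall>n::nat. a n = b n \<otimes>\<^bsub>G\<^esub> c n"
      by (rule decomp[OF a])
    obtain S1 where S1: "S1 \<subseteq> carrier G" "finite S1" "card S1 = m1" "\<forall>n::nat. b n \<in> set_pow G S1 (w1 n)"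
      using w1(3)[THEN spec[of _ b], THEN mp, OF bc(1)] by blast
    obtain S2 where S2: "S2 \<subseteq> carrier G" "finite S2" "card S2 = m2" "\<forall>n::nat. c n \<in> set_pow G S2 (w2 n)"
      using w2(3)[THEN spec[of _ c], THEN mp, OF bc(2)] by blast
    have U: "\<forall>n::nat. a n \<in> set_pow G (S1 \<union> S2) (w1 n + w2 n)"
    proof
      fix n show "a n \<in> set_pow G (S1 \<union> S2) (w1 n + w2 n)"
        using set_pow_mult[OF assms(1) S1(1) S2(1) S1(4)[rule_format, of n] S2(4)[rule_format, of n]] bc(3)
        by simp
    qed
    have cU: "card (S1 \<union> S2) \<le> m1 + m2" using card_Un_le[of S1 S2] S1(3) S2(3) by simp
    obtain T where T: "S1 \<union> S2 \<subseteq> T" "T \<subseteq> carrier G" "finite T" "card T = M"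
    proof (cases "infinite (carrier G) \<or> m1 + m2 \<le> card (carrier G)")
      case True
      have "M = m1 + m2" using True M_def by simp
      moreover have "\<exists>T. S1 \<union> S2 \<subseteq> T \<and> T \<subseteq> carrier G \<and> finite T \<and> card T = m1 + m2"
        using pad_set[of "S1 \<union> S2" "carrier G" "m1 + m2"] S1(1,2) S2(1,2) cU True by simp
      ultimately show ?thesis using that by blast
    next
      case False
      then have "M = card (carrier G)" "finite (carrier G)" using M_def by simp_all
      then show ?thesis using that[of "carrier G"] S1(1) S2(1) by simp
    qed
    show "\<exists>S\<subseteq>carrier G. finite S \<and> card S = M \<and> (\<forall>n::nat. a n \<in> set_pow G S (w1 n + w2 n))"
      using T U set_pow_mono[OF T(1), of G] by (intro exI[of _ T]) blast
  qed
qed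

theorem lemma3p4:
  fixes G :: "('a, 'b) monoid_scheme" and As :: "'a set list"
  assumes "group G"
    and "\<forall>A \<in> set As. A \<subseteq> carrier G"
  shows "((\<forall>A \<in> set As. seq_distorted G A) \<longrightarrow> seq_distorted G (set_list_prod G As))
       \<and> ((\<forall>A \<in> set As. strongly_distorted G A) \<longrightarrow> strongly_distorted G (set_list_prod G As))"
proof (intro conjI impI)
  show "(\<forall>A \<in> set As. seq_distorted G A) \<Longrightarrow> seq_distorted G (set_list_prod G As)"
    by (induction As) (simp_all add: set_list_prod_Nil set_list_prod_Cons seq_one seq_mul assms(1))
  show "(\<forall>A \<in> set As. strongly_distorted G A) \<Longrightarrow> strongly_distorted G (set_list_prod G As)"
    by (induction As) (simp_all add: set_list_prod_Nil set_list_prod_Cons strong_one strong_mul assms(1))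
qed

end
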